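(* Let $\varphi$ be a flow on a locally compact metric space $X$, let $S\subset X$ be a nonempty compact invariant set, and let $\mathcal M=\{M_p\mid p\in\mathbb P\}$ be a finite indexed family of mutually disjoint isolated invariant sets in $S$. The following are equivalent: (i) $\mathcal M$ is a Morse predecomposition of $S$; (ii) there exists a family $\{N_p\mid p\in\mathbb P\}$ of mutually disjoint isolating neighborhoods in $S$ such that $M_p=\operatorname{Inv}N_p$ for every $p$, and for every full solution $\gamma$ in $S$ there exist $p,q\in\mathbb P$ such that $\gamma$ wades through $N_p$ in minus infinity and wades through $N_q$ in plus infinity.
   Context: A full solution is a map $\gamma:\mathbb R\to X$ with $\gamma(s+t)=\varphi(\gamma(s),t)$; it is in $S$ if its image lies in $S$. $\alpha(\gamma)=\bigcap_{t<0}\operatorname{cl}\gamma((-\infty,t])$, $\omega(\gamma)=\bigcap_{t>0}\operatorname{cl}\gamma([t,\infty))$. $\operatorname{Inv}N=\{x\in N\mid\varphi(x,\mathbb R)\subset N\}$; invariant means $\operatorname{Inv}$ of itself. Isolating neighborhoods and isolated invariant sets "in $S$" refer to the flow restricted to $S$: a compact $N\subset S$ is an isolating neighborhood if $\operatorname{Inv}N\subset\operatorname{int}_S N$; isolated invariant sets are those of the form $\operatorname{Inv}N$ for such $N$. A full solution $\gamma$ in $S$ is a link from $S_1$ to $S_2$ if $\alpha(\gamma)\cap S_1\ne\emptyset\ne\omega(\gamma)\cap S_2$. A Morse predecomposition of $S$ is an indexed family of mutually disjoint closed invariant subsets $\{M_p\mid p\in\mathbb P\}$ of $S$ such that every full solution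 in $S$ is a link from $M_p$ to $M_q$ for some $p,q$. A full solution $\gamma$ wades through $N$ in plus infinity if there are real sequences $(t^-_n),(t^+_n)$ with $t^-_n\to+\infty$, $t^+_n-t^-_n\to+\infty$ and $\gamma([t^-_n,t^+_n])\subset N$ for all $n$; it wades through $N$ in minus infinity if there are such sequences with $t^+_n\to-\infty$, $t^+_n-t^-_n\to+\infty$ and $\gamma([t^-_n,t^+_n])\subset N$ for all $n$. *)

theory Defs
  imports "HOL-Analysis.Analysis"
begin

definition is_flow :: "('a::topological_space \<Rightarrow> real \<Rightarrow> 'a) \<Rightarrow> bool" where
  "is_flow \<phi> \<longleftrightarrow> continuous_on UNIV (\<lambda>(x, t). \<phi> x t) \<and> (\<forall>x. \<phi> x 0 = x)
     \<and> (\<forall>x s t. \<phi> (\<phi> x s) t = \<phi> x (s + t))"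

definition full_solution :: "('a \<Rightarrow> real \<Rightarrow> 'a) \<Rightarrow> (real \<Rightarrow> 'a) \<Rightarrow> bool" where
  "full_solution \<phi> \<gamma> \<longleftrightarrow> (\<forall>s t. \<gamma> (s + t) = \<phi> (\<gamma> s) t)"

definition full_solution_in :: "('a \<Rightarrow> real \<Rightarrow> 'a) \<Rightarrow> 'a set \<Rightarrow> (real \<Rightarrow> 'a) \<Rightarrow> bool" where
  "full_solution_in \<phi> S \<gamma> \<longleftrightarrow> full_solution \<phi> \<gamma> \<and> range \<gamma> \<subseteq> S"

definition alpha_limit :: "(real \<Rightarrow> 'a::topological_space) \<Rightarrow> 'a set" where
  "alpha_limit \<gamma> = (\<Inter>t\<in>{..<0}. closure (\<gamma> ` {..t}))"

definition omega_limit :: "(real \<Rightarrow> 'a::topological_space) \<Rightarrow> 'a set" where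
  "omega_limit \<gamma> = (\<Inter>t\<in>{0<..}. closure (\<gamma> ` {t..}))"

definition Inv :: "('a \<Rightarrow> real \<Rightarrow> 'a) \<Rightarrow> 'a set \<Rightarrow> 'a set" where
  "Inv \<phi> N = {x \<in> N. range (\<phi> x) \<subseteq> N}"

definition invariant :: "('a \<Rightarrow> real \<Rightarrow> 'a) \<Rightarrow> 'a set \<Rightarrow> bool" where
  "invariant \<phi> A \<longleftrightarrow> Inv \<phi> A = A"

definition isolating_nbhd_in :: "('a::topological_space \<Rightarrow> real \<Rightarrow> 'a) \<Rightarrow> 'a set \<Rightarrow> 'a set \<Rightarrow> bool" where
  "isolating_nbhd_in \<phi> S N \<longleftrightarrow> compact N \<and> N \<subseteq> S \<and> Inv \<phi> N \<subseteq> (top_of_set S) interior_of N"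

definition isolated_invariant_in :: "('a::topological_space \<Rightarrow> real \<Rightarrow> 'a) \<Rightarrow> 'a set \<Rightarrow> 'a set \<Rightarrow> bool" where
  "isolated_invariant_in \<phi> S M \<longleftrightarrow> (\<exists>N. isolating_nbhd_in \<phi> S N \<and> M = Inv \<phi> N)"

definition is_link_in :: "('a::topological_space \<Rightarrow> real \<Rightarrow> 'a) \<Rightarrow> 'a set \<Rightarrow> (real \<Rightarrow> 'a) \<Rightarrow> 'a set \<Rightarrow> 'a set \<Rightarrow> bool" where
  "is_link_in \<phi> S \<gamma> S1 S2 \<longleftrightarrow> full_solution_in \<phi> S \<gamma>
     \<and> alpha_limit \<gamma> \<inter> S1 \<noteq> {} \<and> omega_limit \<gamma> \<inter> S2 \<noteq> {}"

definition mutually_disjoint :: "'p set \<Rightarrow> ('p \<Rightarrow> 'a set) \<Rightarrow> bool" where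
  "mutually_disjoint P M \<longleftrightarrow> (\<forall>p\<in>P. \<forall>q\<in>P. p \<noteq> q \<longrightarrow> M p \<inter> M q = {})"

definition morse_predecomposition ::
  "('a::topological_space \<Rightarrow> real \<Rightarrow> 'a) \<Rightarrow> 'a set \<Rightarrow> 'p set \<Rightarrow> ('p \<Rightarrow> 'a set) \<Rightarrow> bool" where
  "morse_predecomposition \<phi> S P M \<longleftrightarrow>
     mutually_disjoint P M
     \<and> (\<forall>p\<in>P. closed (M p) \<and> invariant \<phi> (M p) \<and> M p \<subseteq> S)
     \<and> (\<forall>\<gamma>. full_solution_in \<phi> S \<gamma> \<longrightarrow> (\<exists>p\<in>P. \<exists>q\<in>P. is_link_in \<phi> S \<gamma> (M p) (M q)))"

definition wades_plus :: "(real \<Rightarrow> 'a) \<Rightarrow> 'a set \<Rightarrow> bool" where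
  "wades_plus \<gamma> N \<longleftrightarrow> (\<exists>tm tp :: nat \<Rightarrow> real.
     filterlim tm at_top sequentially \<and> filterlim (\<lambda>n. tp n - tm n) at_top sequentially
     \<and> (\<forall>n. \<gamma> ` {tm n..tp n} \<subseteq> N))"

definition wades_minus :: "(real \<Rightarrow> 'a) \<Rightarrow> 'a set \<Rightarrow> bool" where
  "wades_minus \<gamma> N \<longleftrightarrow> (\<exists>tm tp :: nat \<Rightarrow> real.
     filterlim tp at_bot sequentially \<and> filterlim (\<lambda>n. tp n - tm n) at_top sequentially
     \<and> (\<forall>n. \<gamma> ` {tm n..tp n} \<subseteq> N))"

end

theory Submission 
  imports Defs
begin

lemma flow_tendsto:
  fixes \<phi> :: "'a::metric_space \<Rightarrow> real \<Rightarrow> 'a"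
  assumes "is_flow \<phi>" "(f \<longlongrightarrow> y) F" "(g \<longlongrightarrow> u) F"
  shows "((\<lambda>k. \<phi> (f k) (g k)) \<longlongrightarrow> \<phi> y u) F"
proof -
  have c: "continuous_on UNIV (\<lambda>(x, t). \<phi> x t)" using assms(1) by (simp add: is_flow_def)
  have "isCont (\<lambda>(x, t). \<phi> x t) (y, u)"
    using c continuous_on_eq_continuous_at by blast
  from isCont_tendsto_compose[OF this tendsto_Pair[OF assms(2,3)]] show ?thesis by simp
qed

lemma full_sol_shift: "full_solution \<phi> \<gamma> \<Longrightarrow> \<gamma> (s + t) = \<phi> (\<gamma> s) t"
  by (simp add: full_solution_def)

lemma Inv_closed:
  fixes \<phi> :: "'a::metric_space \<Rightarrow> real \<Rightarrow> 'a"
  assumes "is_flow \<phi>" "closed N"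
  shows "closed (Inv \<phi> N)"
  unfolding closed_sequential_limits
proof (intro allI impI, elim conjE)
  fix x l assume x: "\<forall>n. x n \<in> Inv \<phi> N" and l: "x \<longlonglongrightarrow> l"
  have "\<phi> l t \<in> N" for t
  proof (rule Lim_in_closed_set[OF assms(2)])
    show "\<forall>\<^sub>F n in sequentially. \<phi> (x n) t \<in> N" using x by (auto simp: Inv_def intro!: always_eventually)
    show "((\<lambda>n. \<phi> (x n) t) \<longlongrightarrow> \<phi> l t) sequentially"
      by (rule flow_tendsto[OF assms(1) l tendsto_const])
  qed simp
  moreover have "\<phi> l 0 = l" using assms(1) by (simp add: is_flow_def)
  ultimately show "l \<in> Inv \<phi> N" unfolding Inv_def by (metis (no_types, lifting) image_subset_iff mem_Collect_eq rangeI)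
qed

lemma Inv_shift:
  assumes "is_flow \<phi>" "x \<in> Inv \<phi> N"
  shows "\<phi> x s \<in> Inv \<phi> N"
proof -
  have "\<phi> (\<phi> x s) t = \<phi> x (s + t)" for t using assms(1) by (simp add: is_flow_def)
  then show ?thesis using assms(2) by (auto simp: Inv_def)
qed

lemma Inv_mono: "A \<subseteq> B \<Longrightarrow> Inv \<phi> A \<subseteq> Inv \<phi> B"
  by (auto simp: Inv_def)

lemma isolated_props:
  fixes \<phi> :: "'a::metric_space \<Rightarrow> real \<Rightarrow> 'a"
  assumes "is_flow \<phi>" "isolated_invariant_in \<phi> S M"
  shows "closed M" "invariant \<phi> M" "M \<subseteq> S" "compact M"
proof -
  obtain N where N: "isolating_nbhd_in \<phi> S N" "M = Inv \<phi> N"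
    using assms(2) by (auto simp: isolated_invariant_in_def)
  show "closed M" using N Inv_closed[OF assms(1)] compact_imp_closed
    by (metis isolating_nbhd_in_def)
  moreover have "M \<subseteq> N" using N by (auto simp: Inv_def)
  ultimately have "compact (N \<inter> M)" using N by (meson compact_Int_closed isolating_nbhd_in_def)
  then show "compact M" using \<open>M \<subseteq> N\<close> by (simp add: Int_absorb1)
  show "M \<subseteq> S" using \<open>M \<subseteq> N\<close> N by (auto simp: isolating_nbhd_in_def)
  show "invariant \<phi> M" unfolding invariant_def
  proof
    show "Inv \<phi> M \<subseteq> M" by (auto simp: Inv_def)
    show "M \<subseteq> Inv \<phi> M" using Inv_shift[OF assms(1)] N(2) by (auto simp: Inv_def)
  qed
qed

lemma shift_filterlim: "filterlim f F sequentially \<Longrightarrow> filterlim (\<lambda>n. f (n + k)) F sequentially"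
  unfolding filterlim_iff by (auto simp: eventually_sequentially_seg[where P="\<lambda>n. _ (f n)"])

lemma shift_seqs:
  fixes tm tp :: "nat \<Rightarrow> real"
  assumes "filterlim (\<lambda>n. tp n - tm n) at_top sequentially"
  obtains k where "\<forall>n. tm (n + k) \<le> tp (n + k)"
proof -
  have "\<forall>\<^sub>F n in sequentially. 0 \<le> tp n - tm n" using assms unfolding filterlim_at_top by blast
  then obtain k where "\<forall>n\<ge>k. 0 \<le> tp n - tm n" by (auto simp: eventually_sequentially)
  then show ?thesis using that[of k] by auto
qed

lemma wades_plus_normal:
  assumes "wades_plus \<gamma> N"
  obtains tm tp :: "nat \<Rightarrow> real" where "filterlim tm at_top sequentially"
    "filterlim (\<lambda>n. tp n - tm n) at_top sequentially" "\<And>n. \<gamma> ` {tm n..tp n} \<subseteq> N"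
    "\<And>n. tm n \<le> tp n"
proof -
  obtain tm tp :: "nat \<Rightarrow> real" where a: "filterlim tm at_top sequentially"
    and b: "filterlim (\<lambda>n. tp n - tm n) at_top sequentially"
    and c: "\<And>n. \<gamma> ` {tm n..tp n} \<subseteq> N"
    using assms unfolding wades_plus_def by blast
  obtain k where k: "\<forall>n. tm (n + k) \<le> tp (n + k)" using shift_seqs[OF b] by blast
  show ?thesis
    by (rule that[of "\<lambda>n. tm (n + k)" "\<lambda>n. tp (n + k)"])
      (use a b c k shift_filterlim[OF a, of k] shift_filterlim[OF b, of k] in auto)
qed

lemma wades_minus_normal:
  assumes "wades_minus \<gamma> N"
  obtains tm tp :: "nat \<Rightarrow> real" where "filterlim tp at_bot sequentially"
    "filterlim (\<lambda>n. tp n - tm n) at_top sequentially" "\<And>n. \<gamma> ` {tm n..tp n} \<subseteq> N"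
    "\<And>n. tm n \<le> tp n"
proof -
  obtain tm tp :: "nat \<Rightarrow> real" where a: "filterlim tp at_bot sequentially"
    and b: "filterlim (\<lambda>n. tp n - tm n) at_top sequentially"
    and c: "\<And>n. \<gamma> ` {tm n..tp n} \<subseteq> N"
    using assms unfolding wades_minus_def by blast
  obtain k where k: "\<forall>n. tm (n + k) \<le> tp (n + k)" using shift_seqs[OF b] by blast
  show ?thesis
    by (rule that[of "\<lambda>n. tp (n + k)" "\<lambda>n. tm (n + k)"])
      (use a b c k shift_filterlim[OF a, of k] shift_filterlim[OF b, of k] in auto)
qed

lemma wades_plus_omega:
  fixes \<phi> :: "'a::metric_space \<Rightarrow> real \<Rightarrow> 'a"
  assumes fl: "is_flow \<phi>" and fs: "full_solution \<phi> \<gamma>" and N: "compact N"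
    and w: "wades_plus \<gamma> N"
  shows "omega_limit \<gamma> \<inter> Inv \<phi> N \<noteq> {}"
proof -
  obtain tm tp :: "nat \<Rightarrow> real" where tm: "filterlim tm at_top sequentially"
    and d: "filterlim (\<lambda>n. tp n - tm n) at_top sequentially"
    and sub: "\<And>n. \<gamma> ` {tm n..tp n} \<subseteq> N" and le: "\<And>n. tm n \<le> tp n"
    using wades_plus_normal[OF w] by blast
  define s where "s n = (tm n + tp n) / 2" for n
  have "seq_compact N" using N compact_imp_seq_compact by blast
  moreover have "\<forall>n. (\<gamma> \<circ> s) n \<in> N"
  proof
    fix n
    have "s n \<in> {tm n..tp n}" using le[of n] by (auto simp: s_def)
    then show "(\<gamma> \<circ> s) n \<in> N" using sub[of n] by auto
  qed
  ultimately obtain y r where "y \<in> N" and r: "strict_mono r" and lim: "((\<gamma> \<circ> s) \<circ> r) \<longlonglongrightarrow> y"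
    by (rule seq_compactE)
  have rs: "filterlim r sequentially sequentially" using r by (rule filterlim_subseq)
  have dr: "filterlim (\<lambda>k. tp (r k) - tm (r k)) at_top sequentially"
    using filterlim_compose[OF d rs] by simp
  have tmr: "filterlim (\<lambda>k. tm (r k)) at_top sequentially"
    using filterlim_compose[OF tm rs] by simp
  have lim': "(\<lambda>k. \<gamma> (s (r k))) \<longlonglongrightarrow> y" using lim by (simp add: o_def)
  have "\<phi> y t \<in> N" for t
  proof (rule Lim_in_closed_set[OF compact_imp_closed[OF N]])
    have "\<forall>\<^sub>F k in sequentially. 2 * \<bar>t\<bar> \<le> tp (r k) - tm (r k)"
      using dr by (simp add: filterlim_at_top)
    then show "\<forall>\<^sub>F k in sequentially. \<phi> (\<gamma> (s (r k))) t \<in> N"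
    proof eventually_elim
      case (elim k)
      have "s (r k) + t \<in> {tm (r k)..tp (r k)}" using elim abs_ge_self[of t] abs_ge_minus_self[of t] by (auto simp: s_def field_simps)
      then have "\<gamma> (s (r k) + t) \<in> N" using sub by blast
      then show ?case using full_sol_shift[OF fs] by metis
    qed
    show "((\<lambda>k. \<phi> (\<gamma> (s (r k))) t) \<longlongrightarrow> \<phi> y t) sequentially"
      by (rule flow_tendsto[OF fl lim' tendsto_const])
  qed simp
  then have yI: "y \<in> Inv \<phi> N" using \<open>y \<in> N\<close> by (auto simp: Inv_def)
  have "y \<in> closure (\<gamma> ` {t..})" if "t > 0" for t
  proof (rule Lim_in_closed_set[OF closed_closure _ _ lim'])
    have "\<forall>\<^sub>F k in sequentially. 0 \<le> tp (r k) - tm (r k)"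
      using le by (intro always_eventually) simp
    moreover have "\<forall>\<^sub>F k in sequentially. t \<le> tm (r k)"
      using tmr by (simp add: filterlim_at_top)
    ultimately show "\<forall>\<^sub>F k in sequentially. \<gamma> (s (r k)) \<in> closure (\<gamma> ` {t..})"
    proof eventually_elim
      case (elim k)
      then have "t \<le> s (r k)" by (simp add: s_def field_simps)
      then have "\<gamma> (s (r k)) \<in> \<gamma> ` {t..}" by simp
      then show ?case using closure_subset by (rule subsetD[rotated])
    qed
  qed simp
  then have "y \<in> omega_limit \<gamma>" by (auto simp: omega_limit_def)
  with yI show ?thesis by blast
qed

lemma wades_minus_alpha:
  fixes \<phi> :: "'a::metric_space \<Rightarrow> real \<Rightarrow> 'a"
  assumes fl: "is_flow \<phi>" and fs: "full_solution \<phi> \<gamma>" and N: "compact N"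
    and w: "wades_minus \<gamma> N"
  shows "alpha_limit \<gamma> \<inter> Inv \<phi> N \<noteq> {}"
proof -
  obtain tp tm :: "nat \<Rightarrow> real" where tm: "filterlim tp at_bot sequentially"
    and d: "filterlim (\<lambda>n. tp n - tm n) at_top sequentially"
    and sub: "\<And>n. \<gamma> ` {tm n..tp n} \<subseteq> N" and le: "\<And>n. tm n \<le> tp n"
    by (rule wades_minus_normal[OF w]) blast
  define s where "s n = (tm n + tp n) / 2" for n
  have "seq_compact N" using N compact_imp_seq_compact by blast
  moreover have "\<forall>n. (\<gamma> \<circ> s) n \<in> N"
  proof
    fix n
    have "s n \<in> {tm n..tp n}" using le[of n] by (auto simp: s_def)
    then show "(\<gamma> \<circ> s) n \<in> N" using sub[of n] by auto
  qed
  ultimately obtain y r where "y \<in> N" and r: "strict_mono r" and lim: "((\<gamma> \<circ> s) \<circ> r) \<longlonglongrightarrow> y"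
    by (rule seq_compactE)
  have rs: "filterlim r sequentially sequentially" using r by (rule filterlim_subseq)
  have dr: "filterlim (\<lambda>k. tp (r k) - tm (r k)) at_top sequentially"
    using filterlim_compose[OF d rs] by simp
  have tmr: "filterlim (\<lambda>k. tp (r k)) at_bot sequentially"
    using filterlim_compose[OF tm rs] by simp
  have lim': "(\<lambda>k. \<gamma> (s (r k))) \<longlonglongrightarrow> y" using lim by (simp add: o_def)
  have "\<phi> y t \<in> N" for t
  proof (rule Lim_in_closed_set[OF compact_imp_closed[OF N]])
    have "\<forall>\<^sub>F k in sequentially. 2 * \<bar>t\<bar> \<le> tp (r k) - tm (r k)"
      using dr by (simp add: filterlim_at_top)
    then show "\<forall>\<^sub>F k in sequentially. \<phi> (\<gamma> (s (r k))) t \<in> N"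
    proof eventually_elim
      case (elim k)
      have "s (r k) + t \<in> {tm (r k)..tp (r k)}" using elim abs_ge_self[of t] abs_ge_minus_self[of t] by (auto simp: s_def field_simps)
      then have "\<gamma> (s (r k) + t) \<in> N" using sub by blast
      then show ?case using full_sol_shift[OF fs] by metis
    qed
    show "((\<lambda>k. \<phi> (\<gamma> (s (r k))) t) \<longlongrightarrow> \<phi> y t) sequentially"
      by (rule flow_tendsto[OF fl lim' tendsto_const])
  qed simp
  then have yI: "y \<in> Inv \<phi> N" using \<open>y \<in> N\<close> by (auto simp: Inv_def)
  have "y \<in> closure (\<gamma> ` {..t})" if "t < 0" for t
  proof (rule Lim_in_closed_set[OF closed_closure _ _ lim'])
    have "\<forall>\<^sub>F k in sequentially. 0 \<le> tp (r k) - tm (r k)"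
      using le by (intro always_eventually) simp
    moreover have "\<forall>\<^sub>F k in sequentially. tp (r k) \<le> t"
      using tmr unfolding filterlim_at_bot by blast
    ultimately show "\<forall>\<^sub>F k in sequentially. \<gamma> (s (r k)) \<in> closure (\<gamma> ` {..t})"
    proof eventually_elim
      case (elim k)
      then have "s (r k) \<le> t" by (simp add: s_def field_simps)
      then have "\<gamma> (s (r k)) \<in> \<gamma> ` {..t}" by simp
      then show ?case using closure_subset by (rule subsetD[rotated])
    qed
  qed simp
  then have "y \<in> alpha_limit \<gamma>" by (auto simp: alpha_limit_def)
  with yI show ?thesis by blast
qed


lemma tube_step:
  fixes \<phi> :: "'a::metric_space \<Rightarrow> real \<Rightarrow> 'a"
  assumes fl: "is_flow \<phi>" and xI: "x \<in> Inv \<phi> N"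
    and iso: "Inv \<phi> N \<subseteq> (top_of_set S) interior_of N"
  obtains T X0 where "open T" "S \<inter> T \<subseteq> N" "open X0" "x \<in> X0"
    "\<And>y u. y \<in> X0 \<Longrightarrow> u \<in> {0..real n} \<Longrightarrow> \<phi> y u \<in> T"
proof -
  have "openin (top_of_set S) ((top_of_set S) interior_of N)" by simp
  then obtain T where T: "open T" "(top_of_set S) interior_of N = S \<inter> T"
    unfolding openin_open by blast
  have "(top_of_set S) interior_of N \<subseteq> N" by (rule interior_of_subset)
  then have TN: "S \<inter> T \<subseteq> N" using T(2) by simp
  have orb: "\<phi> x t \<in> T" for t
  proof -
    have "\<phi> x t \<in> Inv \<phi> N" by (rule Inv_shift[OF fl xI])
    then have "\<phi> x t \<in> S \<inter> T" using iso T(2) by (simp add: subset_iff)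
    then show ?thesis by simp
  qed
  have c: "continuous_on UNIV (\<lambda>(x, t). \<phi> x t)" using fl by (simp add: is_flow_def)
  define W where "W = (\<lambda>(x, t). \<phi> x t) -` T"
  have oW: "open W" unfolding W_def by (rule open_vimage[OF T(1) c])
  have "{x} \<times> {0..real n} \<subseteq> W" using orb by (auto simp: W_def)
  obtain X0 where X0: "x \<in> X0" "open X0" "X0 \<times> {0..real n} \<subseteq> W"
    using Elementary_Topology.tube_lemma[OF compact_Icc oW \<open>{x} \<times> {0..real n} \<subseteq> W\<close>] by blast
  show ?thesis
  proof (rule that[OF T(1) TN X0(2) X0(1)])
    fix y u assume "y \<in> X0" "u \<in> {0..real n}"
    then have "(y, u) \<in> W" using X0(3) by blast
    then show "\<phi> y u \<in> T" by (simp add: W_def)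
  qed
qed

lemma omega_wades:
  fixes \<phi> :: "'a::metric_space \<Rightarrow> real \<Rightarrow> 'a"
  assumes fl: "is_flow \<phi>" and fs: "full_solution_in \<phi> S \<gamma>"
    and x: "x \<in> omega_limit \<gamma>" and xI: "x \<in> Inv \<phi> N"
    and iso: "Inv \<phi> N \<subseteq> (top_of_set S) interior_of N"
  shows "wades_plus \<gamma> N"
proof -
  have "\<exists>s. s \<ge> real n + 1 \<and> \<gamma> ` {s..s + real n} \<subseteq> N" for n
  proof -
    obtain T X0 where T: "open T" "S \<inter> T \<subseteq> N" "open X0" "x \<in> X0"
      and tube: "\<And>y u. y \<in> X0 \<Longrightarrow> u \<in> {0..real n} \<Longrightarrow> \<phi> y u \<in> T"
      using tube_step[OF fl xI iso, of n] by blast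
    have "x \<in> closure (\<gamma> ` {real n + 1..})" using x by (auto simp: omega_limit_def)
    then have "X0 \<inter> \<gamma> ` {real n + 1..} \<noteq> {}"
      using open_Int_closure_eq_empty[OF T(3)] T(4) by blast
    then obtain s where s: "s \<ge> real n + 1" "\<gamma> s \<in> X0" by auto
    have "\<gamma> v \<in> N" if "v \<in> {s..s + real n}" for v
    proof -
      have "\<gamma> v = \<phi> (\<gamma> s) (v - s)" using full_sol_shift[of \<phi> \<gamma> s "v - s"] fs
        by (simp add: full_solution_in_def)
      moreover have "\<phi> (\<gamma> s) (v - s) \<in> T" using tube[OF s(2)] that by auto
      moreover have "\<gamma> v \<in> S" using fs by (auto simp: full_solution_in_def)
      ultimately show ?thesis using T(2) by auto
    qed
    then show ?thesis using s(1) by blast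
  qed
  then have "\<forall>n. \<exists>s. s \<ge> real n + 1 \<and> \<gamma> ` {s..s + real n} \<subseteq> N" by blast
  from choice[OF this] obtain sf where sf0: "\<forall>n. sf n \<ge> real n + 1 \<and> \<gamma> ` {sf n..sf n + real n} \<subseteq> N"
    by blast
  have sf: "\<And>n. sf n \<ge> real n + 1" "\<And>n. \<gamma> ` {sf n..sf n + real n} \<subseteq> N" using sf0 by auto
  show ?thesis unfolding wades_plus_def
  proof (intro exI conjI allI)
    show "filterlim sf at_top sequentially"
    proof (rule filterlim_at_top_mono[OF filterlim_real_sequentially always_eventually])
      show "\<forall>n. real n \<le> sf n"
      proof
        fix n show "real n \<le> sf n" using sf(1)[of n] by linarith
      qed
    qed
    show "filterlim (\<lambda>n. (sf n + real n) - sf n) at_top sequentially"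
      by (simp add: filterlim_real_sequentially)
    show "\<gamma> ` {sf n..sf n + real n} \<subseteq> N" for n by (rule sf(2))
  qed
qed

lemma alpha_wades:
  fixes \<phi> :: "'a::metric_space \<Rightarrow> real \<Rightarrow> 'a"
  assumes fl: "is_flow \<phi>" and fs: "full_solution_in \<phi> S \<gamma>"
    and x: "x \<in> alpha_limit \<gamma>" and xI: "x \<in> Inv \<phi> N"
    and iso: "Inv \<phi> N \<subseteq> (top_of_set S) interior_of N"
  shows "wades_minus \<gamma> N"
proof -
  have "\<exists>s. s + real n \<le> - real n - 1 \<and> \<gamma> ` {s..s + real n} \<subseteq> N" for n
  proof -
    obtain T X0 where T: "open T" "S \<inter> T \<subseteq> N" "open X0" "x \<in> X0"
      and tube: "\<And>y u. y \<in> X0 \<Longrightarrow> u \<in> {0..real n} \<Longrightarrow> \<phi> y u \<in> T"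
      using tube_step[OF fl xI iso, of n] by blast
    have "x \<in> closure (\<gamma> ` {..- 2 * real n - 1})" using x by (auto simp: alpha_limit_def)
    then have "X0 \<inter> \<gamma> ` {..- 2 * real n - 1} \<noteq> {}"
      using open_Int_closure_eq_empty[OF T(3)] T(4) by blast
    then obtain s where s: "s \<le> - 2 * real n - 1" "\<gamma> s \<in> X0" by auto
    have "\<gamma> v \<in> N" if "v \<in> {s..s + real n}" for v
    proof -
      have "\<gamma> v = \<phi> (\<gamma> s) (v - s)" using full_sol_shift[of \<phi> \<gamma> s "v - s"] fs
        by (simp add: full_solution_in_def)
      moreover have "\<phi> (\<gamma> s) (v - s) \<in> T" using tube[OF s(2)] that by auto
      moreover have "\<gamma> v \<in> S" using fs by (auto simp: full_solution_in_def)
      ultimately show ?thesis using T(2) by auto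
    qed
    moreover have "s + real n \<le> - real n - 1" using s(1) by simp
    ultimately show ?thesis by blast
  qed
  then have "\<forall>n. \<exists>s. s + real n \<le> - real n - 1 \<and> \<gamma> ` {s..s + real n} \<subseteq> N" by blast
  from choice[OF this] obtain sf where sf0: "\<forall>n. sf n + real n \<le> - real n - 1 \<and> \<gamma> ` {sf n..sf n + real n} \<subseteq> N"
    by blast
  have sf: "\<And>n. sf n + real n \<le> - real n - 1" "\<And>n. \<gamma> ` {sf n..sf n + real n} \<subseteq> N" using sf0 by auto
  show ?thesis unfolding wades_minus_def
  proof (intro exI conjI allI)
    show "filterlim (\<lambda>n. sf n + real n) at_bot sequentially"
      unfolding filterlim_at_bot
    proof
      fix Z :: real
      obtain m :: nat where "- Z \<le> real m" using real_arch_simple by blast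
      have "sf n + real n \<le> Z" if "n \<ge> m" for n
      proof -
        have "real m \<le> real n" using that by simp
        then show ?thesis using sf(1)[of n] \<open>- Z \<le> real m\<close> by linarith
      qed
      then have "\<forall>n\<ge>m. sf n + real n \<le> Z" by blast
      then show "\<forall>\<^sub>F n in sequentially. sf n + real n \<le> Z" by (auto simp: eventually_sequentially)
    qed
    show "filterlim (\<lambda>n. (sf n + real n) - sf n) at_top sequentially"
      by (simp add: filterlim_real_sequentially)
    show "\<gamma> ` {sf n..sf n + real n} \<subseteq> N" for n by (rule sf(2))
  qed
qed

lemma finite_min_pos:
  fixes Q :: "'i \<Rightarrow> real \<Rightarrow> bool"
  assumes "finite I" "\<forall>i\<in>I. \<exists>d>0. \<forall>e. 0 < e \<and> e \<le> d \<longrightarrow> Q i e"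
  shows "\<exists>d>0. \<forall>i\<in>I. \<forall>e. 0 < e \<and> e \<le> d \<longrightarrow> Q i e"
  using assms
proof (induction I rule: finite_induct)
  case empty
  then show ?case by (intro exI[of _ "1::real"]) auto
next
  case (insert x F)
  have "\<forall>i\<in>F. \<exists>d>0. \<forall>e. 0 < e \<and> e \<le> d \<longrightarrow> Q i e" using insert.prems by simp
  then obtain d1 where d1: "(d1::real) > 0" "\<forall>i\<in>F. \<forall>e. 0 < e \<and> e \<le> d1 \<longrightarrow> Q i e"
    using insert.IH by blast
  have "\<exists>d>0. \<forall>e. 0 < e \<and> e \<le> d \<longrightarrow> Q x e" using insert.prems by simp
  then obtain d2 where d2: "(d2::real) > 0" "\<forall>e. 0 < e \<and> e \<le> d2 \<longrightarrow> Q x e"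
    by blast
  have "\<forall>i\<in>insert x F. \<forall>e. 0 < e \<and> e \<le> min d1 d2 \<longrightarrow> Q i e"
  proof (intro ballI allI impI)
    fix i e assume "i \<in> insert x F" "0 < e \<and> e \<le> min d1 d2"
    then show "Q i e" using d1(2) d2(2) by (cases "i = x") auto
  qed
  moreover have "min d1 d2 > 0" using d1(1) d2(1) by simp
  ultimately show ?case by blast
qed

lemma sep_compact:
  fixes A B :: "'a::metric_space set"
  assumes "compact A" "compact B" "A \<inter> B = {}"
  shows "\<exists>d>0. \<forall>a\<in>A. \<forall>b\<in>B. d \<le> dist a b"
proof (cases "A = {} \<or> B = {}")
  case True
  then have "\<forall>a\<in>A. \<forall>b\<in>B. 1 \<le> dist a b" by blast
  then show ?thesis using zero_less_one by blast
next
  case False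
  have "compact (A \<times> B)" using assms compact_Times by blast
  moreover have "A \<times> B \<noteq> {}" using False by auto
  moreover have "continuous_on (A \<times> B) (\<lambda>z. dist (fst z) (snd z))"
    by (intro continuous_intros)
  ultimately obtain z where z: "z \<in> A \<times> B" "\<forall>y\<in>A \<times> B. dist (fst z) (snd z) \<le> dist (fst y) (snd y)"
    using continuous_attains_inf by blast
  have "fst z \<noteq> snd z" using z(1) assms(3) by auto
  then have "dist (fst z) (snd z) > 0" by simp
  moreover have "dist (fst z) (snd z) \<le> dist a b" if "a \<in> A" "b \<in> B" for a b
  proof -
    have "(a, b) \<in> A \<times> B" using that by blast
    then show ?thesis using z(2) by fastforce
  qed
  ultimately show ?thesis by (intro exI[of _ "dist (fst z) (snd z)"] conjI ballI)
qed

lemma infdist_attained: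
  fixes A :: "'a::metric_space set"
  assumes "compact A" "A \<noteq> {}"
  shows "\<exists>a\<in>A. dist x a \<le> infdist x A"
proof -
  have "continuous_on A (\<lambda>a. dist x a)" by (intro continuous_intros)
  then obtain a where a: "a \<in> A" "\<forall>y\<in>A. dist x a \<le> dist x y"
    using continuous_attains_inf[OF assms] by blast
  have "dist x a \<le> (INF y\<in>A. dist x y)" using a(2) assms(2) by (intro cINF_greatest) auto
  then show ?thesis using a(1) infdist_notempty[OF assms(2)] by auto
qed

lemma Mprops_l:
  fixes \<phi> :: "'a::metric_space \<Rightarrow> real \<Rightarrow> 'a"
  assumes fl: "is_flow \<phi>" "\<forall>p\<in>P. isolated_invariant_in \<phi> S (M p)" "p \<in> P"
  shows "closed (M p)" "invariant \<phi> (M p)" "M p \<subseteq> S" "compact (M p)"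
  using isolated_props[OF fl(1)] fl(2,3) by auto

lemma backward:
  fixes \<phi> :: "'a::metric_space \<Rightarrow> real \<Rightarrow> 'a"
    and M N :: "'p \<Rightarrow> 'a set"
  assumes fl: "is_flow \<phi>" and mdM: "mutually_disjoint P M"
    and iso: "\<forall>p\<in>P. isolated_invariant_in \<phi> S (M p)"
    and N: "\<forall>p\<in>P. isolating_nbhd_in \<phi> S (N p) \<and> M p = Inv \<phi> (N p)"
    and W: "\<forall>\<gamma>. full_solution_in \<phi> S \<gamma> \<longrightarrow>
           (\<exists>p\<in>P. \<exists>q\<in>P. wades_minus \<gamma> (N p) \<and> wades_plus \<gamma> (N q))"
  shows "morse_predecomposition \<phi> S P M"
proof -
  have link: "\<exists>p\<in>P. \<exists>q\<in>P. is_link_in \<phi> S \<gamma> (M p) (M q)" if fs: "full_solution_in \<phi> S \<gamma>" for \<gamma>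
  proof -
    obtain p q where pq: "p \<in> P" "q \<in> P" "wades_minus \<gamma> (N p)" "wades_plus \<gamma> (N q)"
      using W fs by blast
    have fs': "full_solution \<phi> \<gamma>" using fs by (simp add: full_solution_in_def)
    have cp: "compact (N p)" and cq: "compact (N q)" using N pq by (auto simp: isolating_nbhd_in_def)
    have "alpha_limit \<gamma> \<inter> M p \<noteq> {}"
      using wades_minus_alpha[OF fl fs' cp pq(3)] N pq(1) by auto
    moreover have "omega_limit \<gamma> \<inter> M q \<noteq> {}"
      using wades_plus_omega[OF fl fs' cq pq(4)] N pq(2) by auto
    ultimately show ?thesis using pq fs by (auto simp: is_link_in_def)
  qed
  have "\<forall>p\<in>P. closed (M p) \<and> invariant \<phi> (M p) \<and> M p \<subseteq> S"
    using Mprops_l[OF fl iso] by blast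
  then show "morse_predecomposition \<phi> S P M"
    unfolding morse_predecomposition_def using mdM link by blast
qed
lemma forward:
  fixes \<phi> :: "'a::metric_space \<Rightarrow> real \<Rightarrow> 'a"
    and S :: "'a set"
    and P :: "'p set"
    and M :: "'p \<Rightarrow> 'a set"
  assumes "is_flow \<phi>"
    and "finite P"
    and "mutually_disjoint P M"
    and "\<forall>p\<in>P. isolated_invariant_in \<phi> S (M p)"
    and morse: "morse_predecomposition \<phi> S P M"
  shows "\<exists>N :: 'p \<Rightarrow> 'a set.
        mutually_disjoint P N
      \<and> (\<forall>p\<in>P. isolating_nbhd_in \<phi> S (N p) \<and> M p = Inv \<phi> (N p))
      \<and> (\<forall>\<gamma>. full_solution_in \<phi> S \<gamma> \<longrightarrow>
           (\<exists>p\<in>P. \<exists>q\<in>P. wades_minus \<gamma> (N p) \<and> wades_plus \<gamma> (N q)))"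
proof -
  note fl = assms(1)
  have Mprops: "closed (M p)" "invariant \<phi> (M p)" "M p \<subseteq> S" "compact (M p)" if "p \<in> P" for p
    using Mprops_l[OF fl assms(4) that] by blast+
  obtain N' where N': "\<And>p. p \<in> P \<Longrightarrow> isolating_nbhd_in \<phi> S (N' p) \<and> M p = Inv \<phi> (N' p)"
    using assms(4) unfolding isolated_invariant_in_def by metis
  define I where "I = {(p, q). p \<in> P \<and> q \<in> P \<and> p \<noteq> q}"
  have fI: "finite I" unfolding I_def
    by (rule finite_subset[of _ "P \<times> P"]) (use assms(2) in auto)
  have "\<forall>i\<in>I. \<exists>d>0. \<forall>e. 0 < e \<and> e \<le> d \<longrightarrow> (\<forall>a\<in>M (fst i). \<forall>b\<in>M (snd i). e \<le> dist a b)"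
  proof
    fix i assume "i \<in> I"
    then obtain p q where pq: "i = (p, q)" "p \<in> P" "q \<in> P" "p \<noteq> q" by (auto simp: I_def)
    have "M p \<inter> M q = {}" using assms(3) pq by (auto simp: mutually_disjoint_def)
    then obtain d where "d > 0" "\<forall>a\<in>M p. \<forall>b\<in>M q. d \<le> dist a b"
      using sep_compact[OF Mprops(4)[OF pq(2)] Mprops(4)[OF pq(3)]] by blast
    then show "\<exists>d>0. \<forall>e. 0 < e \<and> e \<le> d \<longrightarrow> (\<forall>a\<in>M (fst i). \<forall>b\<in>M (snd i). e \<le> dist a b)"
      using pq(1) by force
  qed
  from finite_min_pos[OF fI this] obtain d where d: "d > 0"
    "\<forall>i\<in>I. \<forall>e. 0 < e \<and> e \<le> d \<longrightarrow> (\<forall>a\<in>M (fst i). \<forall>b\<in>M (snd i). e \<le> dist a b)"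
    by blast
  have sep: "d \<le> dist a b" if "p \<in> P" "q \<in> P" "p \<noteq> q" "a \<in> M p" "b \<in> M q" for p q a b
    using d that by (auto simp: I_def)
  define N where "N p = (if M p = {} then {} else N' p \<inter> {x. infdist x (M p) \<le> d / 3})" for p
  have disj: "mutually_disjoint P N"
    unfolding mutually_disjoint_def
  proof (intro ballI impI)
    fix p q assume pq: "p \<in> P" "q \<in> P" "p \<noteq> q"
    show "N p \<inter> N q = {}"
    proof (rule ccontr)
      assume "N p \<inter> N q \<noteq> {}"
      then obtain x where x: "x \<in> N p" "x \<in> N q" by blast
      then have ne: "M p \<noteq> {}" "M q \<noteq> {}" by (auto simp: N_def split: if_splits)
      have i: "infdist x (M p) \<le> d / 3" "infdist x (M q) \<le> d / 3"
        using x ne by (auto simp: N_def)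
      obtain a where a: "a \<in> M p" "dist x a \<le> infdist x (M p)"
        using infdist_attained[OF Mprops(4)[OF pq(1)] ne(1)] by blast
      obtain b where b: "b \<in> M q" "dist x b \<le> infdist x (M q)"
        using infdist_attained[OF Mprops(4)[OF pq(2)] ne(2)] by blast
      have "dist a b \<le> dist x a + dist x b" by (metis dist_commute dist_triangle)
      moreover have "d \<le> dist a b" using sep[OF pq a(1) b(1)] .
      ultimately show False using i a b d(1) by linarith
    qed
  qed
  have Np: "isolating_nbhd_in \<phi> S (N p) \<and> M p = Inv \<phi> (N p)" if p: "p \<in> P" for p
  proof (cases "M p = {}")
    case True
    then show ?thesis by (simp add: N_def isolating_nbhd_in_def Inv_def)
  next
    case False
    define C where "C = {x. infdist x (M p) \<le> d / 3}"
    have NC: "N p = N' p \<inter> C" using False by (simp add: N_def C_def)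
    have isoN': "isolating_nbhd_in \<phi> S (N' p)" and MN': "M p = Inv \<phi> (N' p)" using N' p by auto
    have cC: "closed C" unfolding C_def
      by (intro closed_Collect_le continuous_intros)
    have MC: "M p \<subseteq> C" using d(1) by (auto simp: C_def)
    have MsubN': "M p \<subseteq> N' p" using MN' by (auto simp: Inv_def)
    have invM: "\<phi> x t \<in> M p" if "x \<in> M p" for x t
      using Inv_shift[OF fl, of x "N' p" t] MN' that by simp
    have MInv: "M p = Inv \<phi> (N p)"
    proof
      show "Inv \<phi> (N p) \<subseteq> M p" using MN' Inv_mono[of "N p" "N' p" \<phi>] NC by auto
      show "M p \<subseteq> Inv \<phi> (N p)" using invM MC MsubN' NC by (auto simp: Inv_def)
    qed
    have "compact (N p)" unfolding NC using isoN' cC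
      by (simp add: compact_Int_closed isolating_nbhd_in_def)
    moreover have "N p \<subseteq> S" using isoN' NC by (auto simp: isolating_nbhd_in_def)
    moreover have "M p \<subseteq> (top_of_set S) interior_of (N p)"
    proof -
      have "M p \<subseteq> (top_of_set S) interior_of (N' p)" using isoN' MN' by (simp add: isolating_nbhd_in_def)
      moreover have "M p \<subseteq> (top_of_set S) interior_of C"
      proof (rule subset_trans[OF _ interior_of_maximal])
        show "M p \<subseteq> S \<inter> {x. infdist x (M p) < d / 3}" using Mprops(3)[OF p] d(1) by auto
        show "S \<inter> {x. infdist x (M p) < d / 3} \<subseteq> C" by (auto simp: C_def)
        have "open {x. infdist x (M p) < d / 3}" by (intro open_Collect_less continuous_intros)
        then show "openin (top_of_set S) (S \<inter> {x. infdist x (M p) < d / 3})"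
          unfolding openin_open by blast
      qed
      ultimately show ?thesis unfolding NC interior_of_Int by blast
    qed
    ultimately show ?thesis using MInv by (simp add: isolating_nbhd_in_def)
  qed
  have wade: "\<exists>p\<in>P. \<exists>q\<in>P. wades_minus \<gamma> (N p) \<and> wades_plus \<gamma> (N q)"
    if fs: "full_solution_in \<phi> S \<gamma>" for \<gamma>
  proof -
    obtain p q where pq: "p \<in> P" "q \<in> P" "is_link_in \<phi> S \<gamma> (M p) (M q)"
      using morse fs unfolding morse_predecomposition_def by blast
    obtain x where x: "x \<in> alpha_limit \<gamma>" "x \<in> M p" using pq(3) by (auto simp: is_link_in_def)
    obtain y where y: "y \<in> omega_limit \<gamma>" "y \<in> M q" using pq(3) by (auto simp: is_link_in_def)
    have isoP: "Inv \<phi> (N p) \<subseteq> (top_of_set S) interior_of (N p)"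
      and isoQ: "Inv \<phi> (N q) \<subseteq> (top_of_set S) interior_of (N q)"
      using Np pq by (auto simp: isolating_nbhd_in_def)
    have "wades_minus \<gamma> (N p)"
      by (rule alpha_wades[OF fl fs x(1) _ isoP]) (use x(2) Np[OF pq(1)] in auto)
    moreover have "wades_plus \<gamma> (N q)"
      by (rule omega_wades[OF fl fs y(1) _ isoQ]) (use y(2) Np[OF pq(2)] in auto)
    ultimately show ?thesis using pq by blast
  qed
  show ?thesis
    using disj Np wade by blast
qed
theorem theorem5p22:
  fixes \<phi> :: "'a::metric_space \<Rightarrow> real \<Rightarrow> 'a"
    and S :: "'a set"
    and P :: "'p set"
    and M :: "'p \<Rightarrow> 'a set"
  assumes "is_flow \<phi>"
    and "locally_compact_space (euclidean :: 'a topology)"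
    and "S \<noteq> {}" and "compact S" and "invariant \<phi> S"
    and "finite P"
    and "mutually_disjoint P M"
    and "\<forall>p\<in>P. isolated_invariant_in \<phi> S (M p)"
  shows "morse_predecomposition \<phi> S P M \<longleftrightarrow>
    (\<exists>N :: 'p \<Rightarrow> 'a set.
        mutually_disjoint P N
      \<and> (\<forall>p\<in>P. isolating_nbhd_in \<phi> S (N p) \<and> M p = Inv \<phi> (N p))
      \<and> (\<forall>\<gamma>. full_solution_in \<phi> S \<gamma> \<longrightarrow>
           (\<exists>p\<in>P. \<exists>q\<in>P. wades_minus \<gamma> (N p) \<and> wades_plus \<gamma> (N q))))"
proof
  assume "morse_predecomposition \<phi> S P M"
  then show "\<exists>N :: 'p \<Rightarrow> 'a set.
        mutually_disjoint P N
      \<and> (\<forall>p\<in>P. isolating_nbhd_in \<phi> S (N p) \<and> M p = Inv \<phi> (N p))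
      \<and> (\<forall>\<gamma>. full_solution_in \<phi> S \<gamma> \<longrightarrow>
           (\<exists>p\<in>P. \<exists>q\<in>P. wades_minus \<gamma> (N p) \<and> wades_plus \<gamma> (N q)))"
    by (rule forward[OF assms(1) assms(6) assms(7) assms(8)])
next
  assume "\<exists>N :: 'p \<Rightarrow> 'a set.
        mutually_disjoint P N
      \<and> (\<forall>p\<in>P. isolating_nbhd_in \<phi> S (N p) \<and> M p = Inv \<phi> (N p))
      \<and> (\<forall>\<gamma>. full_solution_in \<phi> S \<gamma> \<longrightarrow>
           (\<exists>p\<in>P. \<exists>q\<in>P. wades_minus \<gamma> (N p) \<and> wades_plus \<gamma> (N q)))"
  then obtain N :: "'p \<Rightarrow> 'a set" where
    N: "\<forall>p\<in>P. isolating_nbhd_in \<phi> S (N p) \<and> M p = Inv \<phi> (N p)"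
    and W: "\<forall>\<gamma>. full_solution_in \<phi> S \<gamma> \<longrightarrow>
           (\<exists>p\<in>P. \<exists>q\<in>P. wades_minus \<gamma> (N p) \<and> wades_plus \<gamma> (N q))"
    by blast
  show "morse_predecomposition \<phi> S P M"
    by (rule backward[OF assms(1) assms(7) assms(8) N W])
qed

end
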